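(* Consider the $k$-prize collecting traveling salesman problem ($k$-PCTSP) on instances $(G,r,k,c,\pi)$ whose edge cost $c$ satisfies the triangle inequality. The algorithm $\mathcal{B}$ described below is a $4$-approximation algorithm for this problem: it returns a tour $T_{\mathrm{OUT}}$ containing $r$ and visiting at least $k$ vertices whose cost $\sum_{e\in E[T_{\mathrm{OUT}}]}c(e)+\sum_{v\notin V[T_{\mathrm{OUT}}]}\pi(v)$ is at most $4\,\mathrm{OPT}$, where $\mathrm{OPT}$ is the optimal value of the $k$-PCTSP instance.
   Context: A tour of a graph $G$ is a cyclic sequence of vertices $T=(u_1,\dots,u_m,u_1)$, with $E[T]=\{\{u_i,u_{i+1}\}: 1\le i\le m-1\}\cup\{\{u_m,u_1\}\}$ and $V[T]=\{u_1,\dots,u_m\}$. An instance of $k$-PCTSP consists of a complete graph $G=(V,E)$, a root $r\in V$, an integer $k>0$, a nonnegative edge cost $c:E\to\mathbb{R}_+$ and a nonnegative penalty $\pi:V\to\mathbb{R}_+$; a feasible solution is a tour $T$ with $r\in V[T]$ and $|V[T]|\ge k$, of cost $\sum_{e\in E[T]}c(e)+\sum_{v\in V\setminus V[T]}\pi(v)$, and $\mathrm{OPT}$ is the minimum cost. The rooted $k$-TSP instance $(G,r,k,c)$ asks for a tour containing $r$ with at least $k$ vertices minimizing $\sum_{e\in E[T]}c(e)$; the penalty TSP (PTSP) instance $(G,r,c,\pi)$ asks for a tour containing $r$ minimizing $\sum_{e\in E[T]}c(e)+\sum_{v\notin V[T]}\pi(v)$. Garg's algorithm is a 2-approximation algorithm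 for rooted $k$-TSP under the triangle inequality, and the Goemans–Williamson (GW) algorithm is a 2-approximation algorithm for PTSP under the triangle inequality. Algorithm $\mathcal{B}$: Step 1: apply Garg's algorithm to $(G,r,k,c)$, obtaining a tour $T_{\mathrm{Garg}}$. Step 2: apply the GW algorithm to $(G,r,c,\pi)$, obtaining a tour $T_{\mathrm{GW}}$. Step 3: merge $T_{\mathrm{Garg}}$ and $T_{\mathrm{GW}}$ (both pass through $r$) into a single closed walk and return the tour $T_{\mathrm{OUT}}$ obtained from it by shortcutting repeated vertices. *)

theory Defs
  imports "HOL-Analysis.Analysis" "HOL-Library.Sublist"
begin

text \<open>Complete graph on a finite vertex set V; an edge is a 2-element set {u,v}.
  Edge costs are given as a function on (2-element) vertex sets.\<close>

definition edges_of :: "'a set \<Rightarrow> 'a set set" where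
  "edges_of V = {{u, v} | u v. u \<in> V \<and> v \<in> V \<and> u \<noteq> v}"

text \<open>A tour is a cyclic sequence of vertices (u_1,...,u_m,u_1), represented by the
  nonempty list [u_1,...,u_m]; V[T] = set T.\<close>

definition is_tour :: "'a set \<Rightarrow> 'a list \<Rightarrow> bool" where
  "is_tour V T \<longleftrightarrow> T \<noteq> [] \<and> set T \<subseteq> V"

text \<open>Edge cost of a tour: sum over the m cyclically consecutive pairs
  {u_i,u_(i+1)} and {u_m,u_1}; a degenerate pair u = u (only possible when a
  vertex is followed by itself, e.g. m = 1) is not an edge and costs 0.\<close>

definition pair_cost :: "('a set \<Rightarrow> real) \<Rightarrow> 'a \<Rightarrow> 'a \<Rightarrow> real" where
  "pair_cost c u v = (if u = v then 0 else c {u, v})"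

definition tour_cost :: "('a set \<Rightarrow> real) \<Rightarrow> 'a list \<Rightarrow> real" where
  "tour_cost c T = (\<Sum>i<length T. pair_cost c (T ! i) (T ! ((i + 1) mod length T)))"

definition penalty_cost :: "'a set \<Rightarrow> ('a \<Rightarrow> real) \<Rightarrow> 'a list \<Rightarrow> real" where
  "penalty_cost V \<pi> T = (\<Sum>v\<in>V - set T. \<pi> v)"

definition metric_cost :: "'a set \<Rightarrow> ('a set \<Rightarrow> real) \<Rightarrow> bool" where
  "metric_cost V c \<longleftrightarrow>
     (\<forall>u\<in>V. \<forall>v\<in>V. \<forall>w\<in>V. u \<noteq> v \<and> v \<noteq> w \<and> u \<noteq> w \<longrightarrow> c {u, w} \<le> c {u, v} + c {v, w})"

definition ktsp_feasible :: "'a set \<Rightarrow> 'a \<Rightarrow> nat \<Rightarrow> 'a list \<Rightarrow> bool" where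
  "ktsp_feasible V r k T \<longleftrightarrow> is_tour V T \<and> r \<in> set T \<and> card (set T) \<ge> k"

definition ktsp_opt :: "'a set \<Rightarrow> 'a \<Rightarrow> nat \<Rightarrow> ('a set \<Rightarrow> real) \<Rightarrow> real" where
  "ktsp_opt V r k c = Inf (tour_cost c ` {T. ktsp_feasible V r k T})"

definition ptsp_feasible :: "'a set \<Rightarrow> 'a \<Rightarrow> 'a list \<Rightarrow> bool" where
  "ptsp_feasible V r T \<longleftrightarrow> is_tour V T \<and> r \<in> set T"

definition ptsp_cost :: "'a set \<Rightarrow> ('a set \<Rightarrow> real) \<Rightarrow> ('a \<Rightarrow> real) \<Rightarrow> 'a list \<Rightarrow> real" where
  "ptsp_cost V c \<pi> T = tour_cost c T + penalty_cost V \<pi> T"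

definition ptsp_opt :: "'a set \<Rightarrow> 'a \<Rightarrow> ('a set \<Rightarrow> real) \<Rightarrow> ('a \<Rightarrow> real) \<Rightarrow> real" where
  "ptsp_opt V r c \<pi> = Inf (ptsp_cost V c \<pi> ` {T. ptsp_feasible V r T})"

definition kpctsp_opt :: "'a set \<Rightarrow> 'a \<Rightarrow> nat \<Rightarrow> ('a set \<Rightarrow> real) \<Rightarrow> ('a \<Rightarrow> real) \<Rightarrow> real" where
  "kpctsp_opt V r k c \<pi> = Inf (ptsp_cost V c \<pi> ` {T. ktsp_feasible V r k T})"

text \<open>Step 3 of Algorithm B: the closed walk obtained by merging the two tours at r
  (each rotated to start at r, then concatenated), and a shortcut of it: a
  subsequence visiting every vertex of the walk exactly once.\<close>

definition merged_walk :: "'a \<Rightarrow> 'a list \<Rightarrow> 'a list \<Rightarrow> 'a list \<Rightarrow> bool" where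
  "merged_walk r T1 T2 W \<longleftrightarrow>
     (\<exists>i j. hd (rotate i T1) = r \<and> hd (rotate j T2) = r \<and> W = rotate i T1 @ rotate j T2)"

definition shortcut_of :: "'a list \<Rightarrow> 'a list \<Rightarrow> bool" where
  "shortcut_of W T \<longleftrightarrow> subseq T W \<and> distinct T \<and> set T = set W"

end

theory Submission
  imports Defs
begin

fun pcost :: "('a set \<Rightarrow> real) \<Rightarrow> 'a list \<Rightarrow> real" where
  "pcost c (x # y # xs) = pair_cost c x y + pcost c (y # xs)"
| "pcost c _ = 0"

lemma pcost_sum: "pcost c p = (\<Sum>i<length p - 1. pair_cost c (p ! i) (p ! Suc i))"
proof (induction c p rule: pcost.induct)
  case (1 c x y xs)
  then show ?case by (simp add: sum.lessThan_Suc_shift del: sum.lessThan_Suc)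
qed auto

lemma tour_pcost:
  assumes "T \<noteq> []"
  shows "tour_cost c T = pcost c (T @ [hd T])"
proof -
  let ?n = "length T"
  have "pcost c (T @ [hd T]) = (\<Sum>i<?n. pair_cost c ((T @ [hd T]) ! i) ((T @ [hd T]) ! Suc i))"
    by (simp add: pcost_sum)
  also have "\<dots> = (\<Sum>i<?n. pair_cost c (T ! i) (T ! ((i + 1) mod ?n)))"
  proof (rule sum.cong)
    fix i assume "i \<in> {..<?n}"
    hence i: "i < ?n" by simp
    show "pair_cost c ((T @ [hd T]) ! i) ((T @ [hd T]) ! Suc i) = pair_cost c (T ! i) (T ! ((i + 1) mod ?n))"
    proof (cases "Suc i < ?n")
      case True thus ?thesis using i by (simp add: nth_append)
    next
      case False
      hence "Suc i = ?n" using i by simp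
      thus ?thesis using i assms by (simp add: nth_append hd_conv_nth)
    qed
  qed simp
  finally show ?thesis unfolding tour_cost_def by simp
qed

lemma pcost_append:
  assumes "a \<noteq> []" "b \<noteq> []"
  shows "pcost c (a @ b) = pcost c a + pair_cost c (last a) (hd b) + pcost c b"
  using assms
proof (induction a rule: induct_list012)
  case (3 x y zs)
  then show ?case by simp
next
  case (2 x) then show ?case by (cases b) auto
qed auto

lemma tour_rotate1: "T \<noteq> [] \<Longrightarrow> tour_cost c (rotate1 T) = tour_cost c T"
proof -
  assume "T \<noteq> []"
  then obtain x xs where T: "T = x # xs" by (cases T) auto
  show ?thesis
  proof (cases xs)
    case Nil thus ?thesis using T by simp
  next
    case (Cons y ys)
    have "tour_cost c (rotate1 T) = pcost c (y # ys @ [x] @ [y])"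
      using T Cons by (simp add: tour_pcost)
    also have "\<dots> = pcost c (y # ys @ [x]) + pair_cost c x y"
      using pcost_append[of "y # ys @ [x]" "[y]" c] by simp
    also have "\<dots> = pcost c (x # y # ys @ [x])" by simp
    also have "\<dots> = tour_cost c T" using T Cons by (simp add: tour_pcost)
    finally show ?thesis .
  qed
qed

lemma tour_rotate: "T \<noteq> [] \<Longrightarrow> tour_cost c (rotate n T) = tour_cost c T"
  by (induction n) (auto simp: tour_rotate1)

lemma pair_tri:
  assumes "metric_cost V c" "\<forall>e\<in>edges_of V. c e \<ge> 0" "u \<in> V" "v \<in> V" "w \<in> V"
  shows "pair_cost c u w \<le> pair_cost c u v + pair_cost c v w"
proof -
  have nn: "pair_cost c a b \<ge> 0" if "a \<in> V" "b \<in> V" for a b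
    using assms(2) that unfolding pair_cost_def edges_of_def by auto
  show ?thesis
    using assms nn[of u v] nn[of v w] unfolding metric_cost_def pair_cost_def
    by (auto simp: insert_commute)
qed

lemma pcost_end:
  assumes "metric_cost V c" "\<forall>e\<in>edges_of V. c e \<ge> 0" "set (u # ys @ [w]) \<subseteq> V"
  shows "pair_cost c u w \<le> pcost c (u # ys @ [w])"
  using assms(3)
proof (induction ys arbitrary: u)
  case Nil thus ?case by simp
next
  case (Cons y ys)
  have "pair_cost c u w \<le> pair_cost c u y + pair_cost c y w"
    using pair_tri[OF assms(1,2)] Cons.prems by auto
  also have "pair_cost c y w \<le> pcost c (y # ys @ [w])" using Cons by auto
  finally show ?case by simp
qed

lemma pcost_subseq:
  assumes "metric_cost V c" "\<forall>e\<in>edges_of V. c e \<ge> 0"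
  shows "subseq xs ys \<Longrightarrow> set (u # ys @ [w]) \<subseteq> V \<Longrightarrow> pcost c (u # xs @ [w]) \<le> pcost c (u # ys @ [w])"
proof (induction xs ys arbitrary: u rule: list_emb.induct)
  case (list_emb_Nil ys)
  thus ?case using pcost_end[OF assms] by simp
next
  case (list_emb_Cons xs ys y)
  have "pcost c (u # xs @ [w]) \<le> pcost c (u # ys @ [w])" using list_emb_Cons by auto
  also have "\<dots> = pair_cost c u (hd (ys @ [w])) + pcost c (ys @ [w])"
    by (cases ys) auto
  also have "\<dots> \<le> pair_cost c u y + pair_cost c y (hd (ys @ [w])) + pcost c (ys @ [w])"
    using pair_tri[OF assms, of u y "hd (ys @ [w])"] list_emb_Cons.prems
    by (cases ys) auto
  also have "\<dots> = pcost c (u # (y # ys) @ [w])" by (cases ys) auto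
  finally show ?case .
next
  case (list_emb_Cons2 x y xs ys)
  hence "x = y" by simp
  have "pcost c (x # xs @ [w]) \<le> pcost c (x # ys @ [w])"
    using list_emb_Cons2 \<open>x = y\<close> by auto
  thus ?case using \<open>x = y\<close> by simp
qed

lemma shortcut_cost:
  assumes "metric_cost V c" "\<forall>e\<in>edges_of V. c e \<ge> 0"
    and "subseq T W" "T \<noteq> []" "set W \<subseteq> V"
  shows "tour_cost c T \<le> tour_cost c W"
proof -
  obtain t T' where T: "T = t # T'" using assms(4) by (cases T) auto
  obtain us vs where W: "W = us @ t # vs" and s: "subseq T' vs"
    using list_emb_ConsD[of "(=)" t T' W] assms(3) T by auto
  have s2: "subseq T' (vs @ us)" using s by (simp add: list_emb_prefix)
  have "tour_cost c T = pcost c (t # T' @ [t])" using T by (simp add: tour_pcost)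
  also have "\<dots> \<le> pcost c (t # (vs @ us) @ [t])"
    using pcost_subseq[OF assms(1,2) s2, of t t] assms(5) W by auto
  also have "\<dots> = tour_cost c (t # vs @ us)" by (simp add: tour_pcost)
  also have "t # vs @ us = rotate (length us) W" using W by (simp add: rotate_append)
  also have "tour_cost c \<dots> = tour_cost c W" using W by (simp add: tour_rotate)
  finally show ?thesis .
qed

lemma merge_cost:
  assumes "A \<noteq> []" "B \<noteq> []" "hd A = r" "hd B = r"
  shows "tour_cost c (A @ B) = tour_cost c A + tour_cost c B"
proof -
  have "tour_cost c (A @ B) = pcost c (A @ (B @ [r]))" using assms by (simp add: tour_pcost)
  also have "\<dots> = pcost c A + pair_cost c (last A) r + pcost c (B @ [r])"
    using pcost_append[of A "B @ [r]" c] assms by (cases B) auto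
  also have "pcost c A + pair_cost c (last A) r = pcost c (A @ [r])"
    using pcost_append[of A "[r]" c] assms by simp
  finally show ?thesis using assms by (simp add: tour_pcost)
qed

theorem theorem3:
  fixes V :: "'a set" and r :: 'a and k :: nat
    and c :: "'a set \<Rightarrow> real" and \<pi> :: "'a \<Rightarrow> real"
    and T_Garg T_GW W T_OUT :: "'a list"
  assumes "finite V" and "r \<in> V" and "k > 0"
    and "\<forall>e\<in>edges_of V. c e \<ge> 0"
    and "\<forall>v\<in>V. \<pi> v \<ge> 0"
    and "metric_cost V c"
    and Garg: "ktsp_feasible V r k T_Garg"
              "tour_cost c T_Garg \<le> 2 * ktsp_opt V r k c"
    and GW: "ptsp_feasible V r T_GW"
            "ptsp_cost V c \<pi> T_GW \<le> 2 * ptsp_opt V r c \<pi>"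
    and "merged_walk r T_Garg T_GW W"
    and "shortcut_of W T_OUT"
  shows "ktsp_feasible V r k T_OUT \<and> ptsp_cost V c \<pi> T_OUT \<le> 4 * kpctsp_opt V r k c \<pi>"
proof -
  obtain i j where ij: "hd (rotate i T_Garg) = r" "hd (rotate j T_GW) = r"
    "W = rotate i T_Garg @ rotate j T_GW"
    using assms(11) unfolding merged_walk_def by auto
  have G1: "T_Garg \<noteq> []" "set T_Garg \<subseteq> V" "r \<in> set T_Garg" "card (set T_Garg) \<ge> k"
    using Garg(1) unfolding ktsp_feasible_def is_tour_def by auto
  have G2: "T_GW \<noteq> []" "set T_GW \<subseteq> V" "r \<in> set T_GW"
    using GW(1) unfolding ptsp_feasible_def is_tour_def by auto
  have setW: "set W = set T_Garg \<union> set T_GW" using ij by simp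
  have sc: "subseq T_OUT W" "set T_OUT = set W" using assms(12) unfolding shortcut_of_def by auto
  have WV: "set W \<subseteq> V" using setW G1 G2 by auto
  have TO: "T_OUT \<noteq> []" using sc G1 setW by auto
  have feas: "ktsp_feasible V r k T_OUT"
  proof -
    have "card (set T_Garg) \<le> card (set W)"
      using setW by (simp add: card_mono)
    thus ?thesis using sc G1 WV TO setW unfolding ktsp_feasible_def is_tour_def by auto
  qed
  have tc: "tour_cost c T_OUT \<le> tour_cost c T_Garg + tour_cost c T_GW"
  proof -
    have "tour_cost c T_OUT \<le> tour_cost c W"
      using shortcut_cost[OF assms(6,4) sc(1) TO WV] .
    also have "\<dots> = tour_cost c (rotate i T_Garg) + tour_cost c (rotate j T_GW)"
      using ij G1 G2 by (simp add: merge_cost)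
    also have "\<dots> = tour_cost c T_Garg + tour_cost c T_GW"
      using G1 G2 by (simp add: tour_rotate)
    finally show ?thesis .
  qed
  have pen: "penalty_cost V \<pi> T_OUT \<le> penalty_cost V \<pi> T_GW"
    unfolding penalty_cost_def
    using assms(1,5) sc(2) setW by (intro sum_mono2) auto
  have out: "ptsp_cost V c \<pi> T_OUT \<le> tour_cost c T_Garg + ptsp_cost V c \<pi> T_GW"
    using tc pen unfolding ptsp_cost_def by simp
  have pos_pair: "pair_cost c a b \<ge> 0" if "a \<in> V" "b \<in> V" for a b
    using assms(4) that unfolding pair_cost_def edges_of_def by auto
  have tc_nn: "tour_cost c T \<ge> 0" if "set T \<subseteq> V" for T
    unfolding tour_cost_def using that
    by (intro sum_nonneg pos_pair) (auto intro!: nth_mem simp: subset_iff, metis gr_implies_not0 neq0_conv mod_less_divisor nth_mem)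
  have pen_nn: "penalty_cost V \<pi> T \<ge> 0" for T
    unfolding penalty_cost_def using assms(5) by (intro sum_nonneg) auto
  let ?F = "{T. ktsp_feasible V r k T}"
  have ne: "?F \<noteq> {}" using Garg(1) by auto
  have opt1: "ktsp_opt V r k c \<le> kpctsp_opt V r k c \<pi>"
    unfolding kpctsp_opt_def
  proof (rule cInf_greatest)
    show "ptsp_cost V c \<pi> ` ?F \<noteq> {}" using ne by auto
  next
    fix x assume "x \<in> ptsp_cost V c \<pi> ` ?F"
    then obtain T where T: "ktsp_feasible V r k T" "x = ptsp_cost V c \<pi> T" by auto
    have "ktsp_opt V r k c \<le> tour_cost c T"
      unfolding ktsp_opt_def
    proof (rule cInf_lower)
      show "tour_cost c T \<in> tour_cost c ` ?F" using T by auto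
      show "bdd_below (tour_cost c ` ?F)"
        by (rule bdd_belowI[of _ 0]) (auto intro!: tc_nn simp: ktsp_feasible_def is_tour_def)
    qed
    also have "\<dots> \<le> x" using T pen_nn unfolding ptsp_cost_def by simp
    finally show "ktsp_opt V r k c \<le> x" .
  qed
  have opt2: "ptsp_opt V r c \<pi> \<le> kpctsp_opt V r k c \<pi>"
    unfolding kpctsp_opt_def
  proof (rule cInf_greatest)
    show "ptsp_cost V c \<pi> ` ?F \<noteq> {}" using ne by auto
  next
    fix x assume "x \<in> ptsp_cost V c \<pi> ` ?F"
    then obtain T where T: "ktsp_feasible V r k T" "x = ptsp_cost V c \<pi> T" by auto
    show "ptsp_opt V r c \<pi> \<le> x"
      unfolding ptsp_opt_def
    proof (rule cInf_lower)
      show "x \<in> ptsp_cost V c \<pi> ` {T. ptsp_feasible V r T}"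
        using T by (auto simp: ktsp_feasible_def ptsp_feasible_def)
      show "bdd_below (ptsp_cost V c \<pi> ` {T. ptsp_feasible V r T})"
        by (rule bdd_belowI[of _ 0])
          (auto simp: ptsp_feasible_def is_tour_def ptsp_cost_def intro!: add_nonneg_nonneg tc_nn pen_nn)
    qed
  qed
  show ?thesis using feas out Garg(2) GW(2) opt1 opt2 by linarith
qed

end
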